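(* Let $G$ be a graph, let $q\ge k$ be integers, and let $X\subseteq Y\subseteq T\subseteq V(G)$. If $X$ is $(q,k)$-unbreakable in $G$ and no vertex of $Y$ is $(X,T,q+k)$-carvable, then $Y$ is $(q+k,k)$-unbreakable in $G$.
   Context: A vertex cut of $G$ is an ordered pair $(L,R)$ with $L\cup R=V(G)$, $L\setminus R,R\setminus L\ne\emptyset$ and no edge between $L\setminus R$ and $R\setminus L$; its size is $|L\cap R|$. A set $Z$ is $(q,k)$-unbreakable in $G$ if every vertex cut of size at most $k$ has $|L\cap Z|\le q$ or $|R\cap Z|\le q$. The torso $H_T$ of $T$ in $G$ is the graph with vertex set $T$ and an edge $\{u,v\}$ ($u,v\in T$) whenever $\{u,v\}\in E(G)$ or $u,v\in N_G(D)$ for some connected component $D$ of $G\setminus T$. For $X\subseteq T$ and an integer $k'$, an $(X,T,k')$-witness is a vertex cut $(L,R)$ of $G$ with $|L\cap R|\le k'$, $|L\cap T|>|L\cap R|$, and $X\subseteq R$; it is connected if $H_T[(L\setminus R)\cap T]$ is connected. A vertex $v$ is $(X,T,k')$-carvable if there is a connected $(X,T,k')$-witness $(L,R)$ with $v\in L\setminus R$. *)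

theory Defs
  imports Main
begin

definition graph :: "'a set \<Rightarrow> 'a set set \<Rightarrow> bool" where
  "graph V E \<longleftrightarrow> finite V \<and> (\<forall>e\<in>E. e \<subseteq> V \<and> card e = 2)"

definition adj_in :: "'a set set \<Rightarrow> 'a set \<Rightarrow> 'a \<Rightarrow> 'a \<Rightarrow> bool" where
  "adj_in E S u v \<longleftrightarrow> u \<in> S \<and> v \<in> S \<and> {u, v} \<in> E"

definition connected_set :: "'a set set \<Rightarrow> 'a set \<Rightarrow> bool" where
  "connected_set E S \<longleftrightarrow> S \<noteq> {} \<and> (\<forall>u\<in>S. \<forall>v\<in>S. (adj_in E S)\<^sup>*\<^sup>* u v)"

definition component :: "'a set set \<Rightarrow> 'a set \<Rightarrow> 'a set \<Rightarrow> bool" where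
  "component E S D \<longleftrightarrow> D \<subseteq> S \<and> connected_set E D \<and>
     (\<forall>D'. D \<subseteq> D' \<and> D' \<subseteq> S \<and> connected_set E D' \<longrightarrow> D' = D)"

definition neighbourhood :: "'a set set \<Rightarrow> 'a set \<Rightarrow> 'a set" where
  "neighbourhood E D = {u. u \<notin> D \<and> (\<exists>v\<in>D. {u, v} \<in> E)}"

definition vertex_cut :: "'a set \<Rightarrow> 'a set set \<Rightarrow> 'a set \<Rightarrow> 'a set \<Rightarrow> bool" where
  "vertex_cut V E L R \<longleftrightarrow> L \<union> R = V \<and> L - R \<noteq> {} \<and> R - L \<noteq> {} \<and>
     (\<forall>u\<in>L - R. \<forall>v\<in>R - L. {u, v} \<notin> E)"

definition unbreakable :: "'a set \<Rightarrow> 'a set set \<Rightarrow> int \<Rightarrow> int \<Rightarrow> 'a set \<Rightarrow> bool" where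
  "unbreakable V E q k Z \<longleftrightarrow>
     (\<forall>L R. vertex_cut V E L R \<and> int (card (L \<inter> R)) \<le> k \<longrightarrow>
        int (card (L \<inter> Z)) \<le> q \<or> int (card (R \<inter> Z)) \<le> q)"

definition torso_edges :: "'a set \<Rightarrow> 'a set set \<Rightarrow> 'a set \<Rightarrow> 'a set set" where
  "torso_edges V E T = {{u, v} | u v. u \<in> T \<and> v \<in> T \<and> u \<noteq> v \<and>
     ({u, v} \<in> E \<or> (\<exists>D. component E (V - T) D \<and> u \<in> neighbourhood E D \<and> v \<in> neighbourhood E D))}"

definition witness :: "'a set \<Rightarrow> 'a set set \<Rightarrow> 'a set \<Rightarrow> 'a set \<Rightarrow> int \<Rightarrow> 'a set \<Rightarrow> 'a set \<Rightarrow> bool" where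
  "witness V E X T k' L R \<longleftrightarrow> vertex_cut V E L R \<and> int (card (L \<inter> R)) \<le> k' \<and>
     card (L \<inter> T) > card (L \<inter> R) \<and> X \<subseteq> R"

definition connected_witness :: "'a set \<Rightarrow> 'a set set \<Rightarrow> 'a set \<Rightarrow> 'a set \<Rightarrow> int \<Rightarrow> 'a set \<Rightarrow> 'a set \<Rightarrow> bool" where
  "connected_witness V E X T k' L R \<longleftrightarrow> witness V E X T k' L R \<and>
     connected_set (torso_edges V E T) ((L - R) \<inter> T)"

definition carvable :: "'a set \<Rightarrow> 'a set set \<Rightarrow> 'a set \<Rightarrow> 'a set \<Rightarrow> int \<Rightarrow> 'a \<Rightarrow> bool" where
  "carvable V E X T k' v \<longleftrightarrow> (\<exists>L R. connected_witness V E X T k' L R \<and> v \<in> L - R)"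

end

theory Submission
  imports Defs
begin

lemma adj_in_sym: "adj_in E S u v \<Longrightarrow> adj_in E S v u"
  unfolding adj_in_def by (simp add: insert_commute)

lemma rt_sym: "(adj_in E S)\<^sup>*\<^sup>* u v \<Longrightarrow> (adj_in E S)\<^sup>*\<^sup>* v u"
proof -
  have "symp (adj_in E S)" by (auto intro: sympI adj_in_sym)
  hence "symp (adj_in E S)\<^sup>*\<^sup>*" by (rule symp_rtranclp)
  thus "(adj_in E S)\<^sup>*\<^sup>* u v \<Longrightarrow> (adj_in E S)\<^sup>*\<^sup>* v u" by (rule sympD)
qed

lemma adj_in_mono: "S \<subseteq> S' \<Longrightarrow> adj_in E S u v \<Longrightarrow> adj_in E S' u v"
  unfolding adj_in_def by auto

lemma rt_mono: "S \<subseteq> S' \<Longrightarrow> (adj_in E S)\<^sup>*\<^sup>* u v \<Longrightarrow> (adj_in E S')\<^sup>*\<^sup>* u v"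
  by (metis adj_in_mono mono_rtranclp)

lemma rt_in: "(adj_in E S)\<^sup>*\<^sup>* u v \<Longrightarrow> u \<in> S \<Longrightarrow> v \<in> S"
  by (induction rule: rtranclp.induct) (auto simp: adj_in_def)

lemma rt_sub:
  assumes "(adj_in E W)\<^sup>*\<^sup>* x v"
  shows "(adj_in E {v. (adj_in E W)\<^sup>*\<^sup>* x v})\<^sup>*\<^sup>* x v"
  using assms
proof (induction rule: rtranclp.induct)
  case (rtrancl_refl a) then show ?case by simp
next
  case (rtrancl_into_rtrancl a b c)
  have "adj_in E {v. (adj_in E W)\<^sup>*\<^sup>* a v} b c"
    using rtrancl_into_rtrancl.hyps unfolding adj_in_def
    by (auto intro: rtranclp.rtrancl_into_rtrancl simp: adj_in_def)
  then show ?case using rtrancl_into_rtrancl.IH by auto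
qed

lemma graph_edge: "graph V E \<Longrightarrow> {u, v} \<in> E \<Longrightarrow> u \<in> V \<and> v \<in> V \<and> u \<noteq> v"
  unfolding graph_def by fastforce

lemma comp_exists:
  assumes "w \<in> U"
  shows "component E U {x. (adj_in E U)\<^sup>*\<^sup>* w x}"
proof -
  let ?D = "{x. (adj_in E U)\<^sup>*\<^sup>* w x}"
  have sub: "?D \<subseteq> U" using rt_in assms by fast
  have conn: "connected_set E ?D"
    unfolding connected_set_def
  proof (intro conjI ballI)
    show "?D \<noteq> {}" by auto
  next
    fix a b assume a: "a \<in> ?D" and b: "b \<in> ?D"
    have "(adj_in E ?D)\<^sup>*\<^sup>* w a" "(adj_in E ?D)\<^sup>*\<^sup>* w b" using a b rt_sub by fast+
    then show "(adj_in E ?D)\<^sup>*\<^sup>* a b" using rt_sym by (metis rtranclp_trans)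
  qed
  have max: "D' = ?D" if "?D \<subseteq> D'" "D' \<subseteq> U" "connected_set E D'" for D'
  proof
    show "D' \<subseteq> ?D"
    proof
      fix x assume "x \<in> D'"
      moreover have "w \<in> D'" using that(1) by auto
      ultimately have "(adj_in E D')\<^sup>*\<^sup>* w x" using that(3) unfolding connected_set_def by blast
      then show "x \<in> ?D" using rt_mono[OF that(2)] by blast
    qed
  qed (use that in auto)
  show ?thesis unfolding component_def using sub conn max by blast
qed


lemma torso_path:
  assumes g: "graph V E" and TV: "T \<subseteq> V"
    and p: "(adj_in E Q)\<^sup>*\<^sup>* a b" and a: "a \<in> Q \<inter> T"
  shows "(b \<in> T \<longrightarrow> (adj_in (torso_edges V E T) (Q \<inter> T))\<^sup>*\<^sup>* a b) \<and>
         (b \<notin> T \<longrightarrow> (\<exists>t w. t \<in> Q \<inter> T \<and> (adj_in (torso_edges V E T) (Q \<inter> T))\<^sup>*\<^sup>* a t \<and>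
             {t, w} \<in> E \<and> w \<notin> T \<and> (adj_in E (V - T))\<^sup>*\<^sup>* w b))"
  using p
proof (induction b rule: rtranclp_induct)
  case base then show ?case using a by auto
next
  case (step v v')
  let ?tc = "(adj_in (torso_edges V E T) (Q \<inter> T))\<^sup>*\<^sup>*"
  have e: "{v, v'} \<in> E" "v \<in> Q" "v' \<in> Q" using step.hyps(2) unfolding adj_in_def by auto
  have vV: "v \<in> V" "v' \<in> V" "v \<noteq> v'" using graph_edge[OF g e(1)] by auto
  show ?case
  proof (cases "v \<in> T")
    case True
    then have tv: "?tc a v" using step.IH by auto
    show ?thesis
    proof (cases "v' \<in> T")
      case True
      have "{v, v'} \<in> torso_edges V E T" unfolding torso_edges_def using \<open>v \<in> T\<close> True vV e by blast
      then have "adj_in (torso_edges V E T) (Q \<inter> T) v v'" unfolding adj_in_def using \<open>v \<in> T\<close> True e by auto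
      then show ?thesis using tv True by (meson rtranclp.rtrancl_into_rtrancl)
    next
      case False
      then show ?thesis using tv e \<open>v \<in> T\<close> by blast
    qed
  next
    case False
    then obtain t w where tw: "t \<in> Q \<inter> T" "?tc a t" "{t, w} \<in> E" "w \<notin> T" "(adj_in E (V - T))\<^sup>*\<^sup>* w v"
      using step.IH by blast
    show ?thesis
    proof (cases "v' \<in> T")
      case False
      have "adj_in E (V - T) v v'" unfolding adj_in_def using False \<open>v \<notin> T\<close> vV e by auto
      then show ?thesis using tw False by (meson rtranclp.rtrancl_into_rtrancl)
    next
      case True
      show ?thesis
      proof (cases "t = v'")
        case True then show ?thesis using tw by auto
      next
        case False
        have wV: "w \<in> V - T" using graph_edge[OF g tw(3)] tw(4) by auto
        define D where "D = {x. (adj_in E (V - T))\<^sup>*\<^sup>* w x}"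
        have cD: "component E (V - T) D" unfolding D_def using comp_exists[OF wV] .
        have DU: "D \<subseteq> V - T" using cD unfolding component_def by auto
        have "w \<in> D" "v \<in> D" using tw(5) unfolding D_def by auto
        have "t \<in> neighbourhood E D" unfolding neighbourhood_def using \<open>w \<in> D\<close> tw(1,3) DU by auto
        moreover have "v' \<in> neighbourhood E D" unfolding neighbourhood_def
          using \<open>v \<in> D\<close> e(1) \<open>v' \<in> T\<close> DU by (auto simp: insert_commute)
        ultimately have "{t, v'} \<in> torso_edges V E T" unfolding torso_edges_def
          using cD tw(1) \<open>v' \<in> T\<close> False by blast
        then have "adj_in (torso_edges V E T) (Q \<inter> T) t v'" unfolding adj_in_def using tw(1) \<open>v' \<in> T\<close> e by auto
        then show ?thesis using tw(2) \<open>v' \<in> T\<close> by (meson rtranclp.rtrancl_into_rtrancl)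
      qed
    qed
  qed
qed


lemma card_partition_sum:
  assumes fin: "finite W" and BW: "B \<subseteq> W"
  shows "card B = (\<Sum>Q\<in>(\<lambda>x. {v. (adj_in E W)\<^sup>*\<^sup>* x v}) ` W. card (Q \<inter> B))"
proof -
  let ?cls = "\<lambda>x. {v. (adj_in E W)\<^sup>*\<^sup>* x v}"
  let ?Cs = "?cls ` W"
  have clsW: "?cls x \<subseteq> W" if "x \<in> W" for x using rt_in that by fast
  have "B = \<Union>((\<lambda>Q. Q \<inter> B) ` ?Cs)" using BW by auto
  moreover have "card (\<Union>((\<lambda>Q. Q \<inter> B) ` ?Cs)) = (\<Sum>Q\<in>?Cs. card (Q \<inter> B))"
  proof (rule card_UN_disjoint)
    show "finite ?Cs" using fin by simp
    show "\<forall>i\<in>?Cs. finite (i \<inter> B)" using fin BW finite_subset by blast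
    show "\<forall>i\<in>?Cs. \<forall>j\<in>?Cs. i \<noteq> j \<longrightarrow> i \<inter> B \<inter> (j \<inter> B) = {}"
    proof (intro ballI impI)
      fix i j assume i: "i \<in> ?Cs" and j: "j \<in> ?Cs" and ne: "i \<noteq> j"
      obtain x y where x: "i = ?cls x" and y: "j = ?cls y" using i j by blast
      show "i \<inter> B \<inter> (j \<inter> B) = {}"
      proof (rule ccontr)
        assume "i \<inter> B \<inter> (j \<inter> B) \<noteq> {}"
        then obtain z where "(adj_in E W)\<^sup>*\<^sup>* x z" "(adj_in E W)\<^sup>*\<^sup>* y z" using x y by auto
        then have xy: "(adj_in E W)\<^sup>*\<^sup>* x y" "(adj_in E W)\<^sup>*\<^sup>* y x" using rt_sym by (metis rtranclp_trans)+
        have "?cls x = ?cls y" using xy by (auto intro: rtranclp_trans)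
        then show False using ne x y by simp
      qed
    qed
  qed
  ultimately show ?thesis by simp
qed

lemma general_witness:
  assumes g: "graph V E" and TV: "T \<subseteq> V" and YT: "Y \<subseteq> T"
    and cut: "vertex_cut V E L R" and XR: "X \<subseteq> R"
    and big: "card ((L - R) \<inter> Y) > card ((L \<inter> R) - T)"
    and sz: "int (card (L \<inter> R)) \<le> k'"
  shows "\<exists>y\<in>Y. carvable V E X T k' y"
proof -
  define S where "S = L \<inter> R"
  define M where "M = L - R"
  define W where "W = M \<union> (S - T)"
  have finV: "finite V" using g unfolding graph_def by auto
  have LV: "L \<subseteq> V" and RV: "R \<subseteq> V" using cut unfolding vertex_cut_def by auto
  have finW: "finite W" using finV LV unfolding W_def M_def S_def by (meson Diff_subset Int_lower1 Un_least finite_subset order_trans)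
  let ?cls = "\<lambda>x. {v. (adj_in E W)\<^sup>*\<^sup>* x v}"
  have s1: "card (M \<inter> Y) = (\<Sum>Q\<in>?cls ` W. card (Q \<inter> (M \<inter> Y)))"
    by (rule card_partition_sum[OF finW]) (auto simp: W_def)
  have s2: "card (S - T) = (\<Sum>Q\<in>?cls ` W. card (Q \<inter> (S - T)))"
    by (rule card_partition_sum[OF finW]) (auto simp: W_def)
  obtain x where xW: "x \<in> W" and gt: "card (?cls x \<inter> (M \<inter> Y)) > card (?cls x \<inter> (S - T))"
  proof (rule ccontr)
    assume "\<not> thesis"
    with that have "\<forall>Q\<in>?cls ` W. card (Q \<inter> (M \<inter> Y)) \<le> card (Q \<inter> (S - T))"
      by (metis (no_types, lifting) imageE not_less)
    then have "card (M \<inter> Y) \<le> card (S - T)" unfolding s1 s2 by (intro sum_mono) blast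
    then show False using big unfolding M_def S_def by simp
  qed
  define Q where "Q = ?cls x"
  define K where "K = Q \<inter> M"
  define N where "N = neighbourhood E K"
  have QW: "Q \<subseteq> W" unfolding Q_def using rt_in xW by fast
  have KV: "K \<subseteq> V" using LV unfolding K_def M_def by auto
  have KM: "K \<subseteq> M" unfolding K_def by auto
  have NV: "N \<subseteq> V" unfolding N_def neighbourhood_def using graph_edge[OF g] by blast
  have NK: "N \<inter> K = {}" unfolding N_def neighbourhood_def by auto
  have NS: "N \<subseteq> S"
  proof
    fix u assume "u \<in> N"
    then obtain v where u: "u \<notin> K" "v \<in> K" "{u, v} \<in> E" unfolding N_def neighbourhood_def by auto
    have uV: "u \<in> V" using graph_edge[OF g u(3)] by auto
    have vQ: "v \<in> Q" "v \<in> M" using u(2) unfolding K_def by auto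
    have "u \<notin> M"
    proof
      assume "u \<in> M"
      then have "adj_in E W v u" using vQ QW u(3) unfolding adj_in_def W_def by (auto simp: insert_commute)
      then have "u \<in> Q" using vQ(1) unfolding Q_def by (auto intro: rtranclp.rtrancl_into_rtrancl)
      then show False using u(1) \<open>u \<in> M\<close> unfolding K_def by auto
    qed
    moreover have "u \<notin> R - L"
    proof
      assume "u \<in> R - L"
      then have "{v, u} \<notin> E" using cut vQ(2) unfolding vertex_cut_def M_def by blast
      then show False using u(3) by (simp add: insert_commute)
    qed
    ultimately show "u \<in> S" using uV cut unfolding vertex_cut_def S_def M_def by auto
  qed
  have NT: "N - T \<subseteq> Q \<inter> (S - T)"
  proof
    fix u assume uN: "u \<in> N - T"
    then obtain v where u: "v \<in> K" "{u, v} \<in> E" unfolding N_def neighbourhood_def by auto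
    have "u \<in> W" using NS uN unfolding W_def by auto
    then have "adj_in E W v u" using u QW unfolding adj_in_def K_def by (auto simp: insert_commute)
    then have "u \<in> Q" using u(1) unfolding K_def Q_def by (auto intro: rtranclp.rtrancl_into_rtrancl)
    then show "u \<in> Q \<inter> (S - T)" using NS uN by auto
  qed
  have finS: "finite S" using finV LV unfolding S_def by (meson finite_subset le_infI1)
  have finQ: "finite Q" using finW QW finite_subset by blast
  have c1: "card (N - T) \<le> card (Q \<inter> (S - T))" using NT finQ by (simp add: card_mono)
  have QMY: "Q \<inter> (M \<inter> Y) \<subseteq> K \<inter> T" using YT unfolding K_def by auto
  have finK: "finite K" using finV KV finite_subset by blast
  have c2: "card (Q \<inter> (M \<inter> Y)) \<le> card (K \<inter> T)" using QMY finK by (simp add: card_mono)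
  have gt': "card (N - T) < card (K \<inter> T)" using c1 c2 gt unfolding Q_def by linarith
  obtain y where yK: "y \<in> Q \<inter> (M \<inter> Y)" using gt unfolding Q_def by (metis card.empty ex_in_conv less_nat_zero_code)
  define L2 where "L2 = K \<union> N"
  define R2 where "R2 = V - K"
  have L2R2: "L2 \<inter> R2 = N" unfolding L2_def R2_def using NV NK by auto
  have L2mR2: "L2 - R2 = K" unfolding L2_def R2_def using KV NV by auto
  have RmL: "R - L \<subseteq> R2 - L2" unfolding L2_def R2_def using RV KM NS unfolding M_def S_def by auto
  have vc: "vertex_cut V E L2 R2"
    unfolding vertex_cut_def
  proof (intro conjI)
    show "L2 \<union> R2 = V" unfolding L2_def R2_def using KV NV by auto
    show "L2 - R2 \<noteq> {}" using L2mR2 yK unfolding K_def by auto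
    show "R2 - L2 \<noteq> {}" using RmL cut unfolding vertex_cut_def by auto
    show "\<forall>u\<in>L2 - R2. \<forall>v\<in>R2 - L2. {u, v} \<notin> E"
      unfolding L2mR2
    proof (intro ballI notI)
      fix u v assume u: "u \<in> K" and v: "v \<in> R2 - L2" and e: "{u, v} \<in> E"
      have "v \<notin> K" using v unfolding R2_def by auto
      then have "v \<in> N" using u e unfolding N_def neighbourhood_def by (auto simp: insert_commute)
      then show False using v unfolding L2_def by auto
    qed
  qed
  have finN: "finite N" using finV NV finite_subset by blast
  have cardN: "card N = card (N \<inter> T) + card (N - T)"
    using finN by (metis Diff_disjoint Int_Diff_Un Int_Diff_disjoint card_Un_disjoint finite_Diff finite_Int inf_commute)
  have cardL2: "card (L2 \<inter> T) = card (K \<inter> T) + card (N \<inter> T)"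
  proof -
    have "L2 \<inter> T = (K \<inter> T) \<union> (N \<inter> T)" unfolding L2_def by auto
    moreover have "(K \<inter> T) \<inter> (N \<inter> T) = {}" using NK by auto
    ultimately show ?thesis using finK finN by (simp add: card_Un_disjoint)
  qed
  have szN: "card N \<le> card S" using NS finS by (simp add: card_mono)
  have wit: "witness V E X T k' L2 R2"
    unfolding witness_def
  proof (intro conjI)
    show "vertex_cut V E L2 R2" by (rule vc)
    show "int (card (L2 \<inter> R2)) \<le> k'" using L2R2 szN sz unfolding S_def by simp
    show "card (L2 \<inter> R2) < card (L2 \<inter> T)" unfolding L2R2 cardL2 cardN using gt' by simp
    show "X \<subseteq> R2" unfolding R2_def using XR RV KM unfolding M_def by auto
  qed
  have KT: "K \<inter> T = Q \<inter> T" unfolding K_def using QW unfolding W_def by auto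
  have xQ: "x \<in> Q" unfolding Q_def by simp
  have conn: "connected_set (torso_edges V E T) ((L2 - R2) \<inter> T)"
    unfolding L2mR2 connected_set_def
  proof (intro conjI ballI)
    show "K \<inter> T \<noteq> {}" using yK YT unfolding K_def by auto
  next
    fix a b assume a: "a \<in> K \<inter> T" and b: "b \<in> K \<inter> T"
    have "(adj_in E Q)\<^sup>*\<^sup>* x a" "(adj_in E Q)\<^sup>*\<^sup>* x b"
      using a b rt_sub unfolding K_def Q_def by fast+
    then have ab: "(adj_in E Q)\<^sup>*\<^sup>* a b" using rt_sym by (metis rtranclp_trans)
    have "a \<in> Q \<inter> T" using a KT by auto
    from torso_path[OF g TV ab this] b
    show "(adj_in (torso_edges V E T) (K \<inter> T))\<^sup>*\<^sup>* a b" unfolding KT by auto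
  qed
  have "carvable V E X T k' y"
  proof -
    have "y \<in> L2 - R2" using L2mR2 yK unfolding K_def by auto
    then show ?thesis unfolding carvable_def connected_witness_def using wit conn by blast
  qed
  then show ?thesis using yK by auto
qed


lemma one_side:
  assumes g: "graph V E" and TV: "T \<subseteq> V" and YT: "Y \<subseteq> T" and XY: "X \<subseteq> Y"
    and cut: "vertex_cut V E L R" and c1: "int (card (L \<inter> R)) \<le> k"
    and c2: "int (card (L \<inter> X)) \<le> q" and c3: "int (card (L \<inter> Y)) > q + k"
  shows "\<exists>y\<in>Y. carvable V E X T (q + k) y"
proof -
  define R' where "R' = R \<union> (L \<inter> X)"
  define S' where "S' = L \<inter> R'"
  define M where "M = L - R'"
  have finV: "finite V" using g unfolding graph_def by auto
  have LV: "L \<subseteq> V" and RV: "R \<subseteq> V" using cut unfolding vertex_cut_def by auto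
  have finL: "finite L" using finV LV finite_subset by blast
  have S'eq: "S' = (L \<inter> R) \<union> (L \<inter> X)" unfolding S'_def R'_def by auto
  have cS: "card S' \<le> card (L \<inter> R) + card (L \<inter> X)" unfolding S'eq by (rule card_Un_le)
  have finS: "finite S'" unfolding S'_def using finL by simp
  have e1: "card (L \<inter> Y) = card (M \<inter> Y) + card (S' \<inter> Y)"
  proof -
    have "L \<inter> Y = (M \<inter> Y) \<union> (S' \<inter> Y)" "(M \<inter> Y) \<inter> (S' \<inter> Y) = {}" unfolding M_def S'_def by auto
    moreover have "finite (M \<inter> Y)" "finite (S' \<inter> Y)" using finL unfolding M_def S'_def by auto
    ultimately show ?thesis by (metis card_Un_disjoint)
  qed
  have e2: "card S' = card (S' \<inter> T) + card (S' - T)"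
  proof -
    have "S' = (S' \<inter> T) \<union> (S' - T)" "(S' \<inter> T) \<inter> (S' - T) = {}" by auto
    then show ?thesis using finS by (metis card_Un_disjoint finite_Diff finite_Int)
  qed
  have e3: "card (S' \<inter> Y) \<le> card (S' \<inter> T)" using YT finS by (intro card_mono) auto
  have big: "card (M \<inter> Y) > card (S' - T)" using e1 e2 e3 cS c1 c2 c3 by linarith
  have vc: "vertex_cut V E L R'"
    unfolding vertex_cut_def
  proof (intro conjI)
    show "L \<union> R' = V" using cut LV unfolding vertex_cut_def R'_def by auto
    show "L - R' \<noteq> {}" using big unfolding M_def by (metis Int_empty_left card.empty not_less_zero)
    show "R' - L \<noteq> {}" using cut unfolding vertex_cut_def R'_def by auto
    show "\<forall>u\<in>L - R'. \<forall>v\<in>R' - L. {u, v} \<notin> E" using cut unfolding vertex_cut_def R'_def by auto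
  qed
  show ?thesis
  proof (rule general_witness[OF g TV YT vc])
    show "X \<subseteq> R'" using XY YT TV cut unfolding R'_def vertex_cut_def by auto
    show "card ((L - R') \<inter> Y) > card ((L \<inter> R') - T)" using big unfolding M_def S'_def .
    show "int (card (L \<inter> R')) \<le> q + k" using cS c1 c2 unfolding S'_def by linarith
  qed
qed

lemma vc_swap: "vertex_cut V E L R \<Longrightarrow> vertex_cut V E R L"
  unfolding vertex_cut_def by (metis insert_commute sup_commute)

theorem lemma5p5:
  fixes V :: "'a set" and E :: "'a set set" and q k :: int and X Y T :: "'a set"
  assumes "graph V E"
    and "q \<ge> k"
    and "X \<subseteq> Y" and "Y \<subseteq> T" and "T \<subseteq> V"
    and "unbreakable V E q k X"
    and "\<forall>v\<in>Y. \<not> carvable V E X T (q + k) v"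
  shows "unbreakable V E (q + k) k Y"
  unfolding unbreakable_def
proof (intro allI impI)
  fix L R assume h: "vertex_cut V E L R \<and> int (card (L \<inter> R)) \<le> k"
  show "int (card (L \<inter> Y)) \<le> q + k \<or> int (card (R \<inter> Y)) \<le> q + k"
  proof (rule ccontr)
    assume "\<not> ?thesis"
    then have a: "int (card (L \<inter> Y)) > q + k" "int (card (R \<inter> Y)) > q + k" by auto
    have "int (card (L \<inter> X)) \<le> q \<or> int (card (R \<inter> X)) \<le> q" using assms(6) h unfolding unbreakable_def by blast
    then have "\<exists>y\<in>Y. carvable V E X T (q + k) y"
    proof
      assume "int (card (L \<inter> X)) \<le> q"
      then show ?thesis using one_side[OF assms(1,5,4,3)] h a by blast
    next
      assume "int (card (R \<inter> X)) \<le> q"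
      moreover have "vertex_cut V E R L" using h vc_swap by blast
      moreover have "int (card (R \<inter> L)) \<le> k" using h by (simp add: Int_commute)
      ultimately show ?thesis using one_side[OF assms(1,5,4,3)] a by blast
    qed
    then show False using assms(7) by blast
  qed
qed

end
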